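(* Let $(H_q)_{q\ge0}$ be the Hermite polynomials, fix $u\in\mathbb R$ and $\gamma\in\mathbb R$. Then $$\sum_{q=1}^\infty \frac{H_q(u)^2}{q!\,q^{\gamma}}<\infty\quad\Longleftrightarrow\quad\gamma>\tfrac12.$$
   Context: Hermite polynomials are defined by $H_0(x)=1$, $H_1(x)=x$, $H_{q+1}(x)=xH_q(x)-qH_{q-1}(x)$. *)

theory Defs
  imports "HOL-Analysis.Analysis"
begin

text \<open>Probabilists' Hermite polynomials: H_0 = 1, H_1 = x, H_(q+1) = x H_q - q H_(q-1).\<close>
fun hermite :: "nat \<Rightarrow> real \<Rightarrow> real" where
  "hermite 0 x = 1"
| "hermite (Suc 0) x = x"
| "hermite (Suc (Suc q)) x = x * hermite (Suc q) x - real (Suc q) * hermite q x"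

end

theory Submission
  imports Defs
begin


definition hb :: "real \<Rightarrow> nat \<Rightarrow> real" where "hb u k = (hermite k u)^2 / fact k"
definition hS :: "real \<Rightarrow> nat \<Rightarrow> real" where "hS u n = (\<Sum>k\<le>n. hb u k)"

lemma hb_nonneg: "hb u k \<ge> 0" unfolding hb_def by simp

lemma hS_pos: "hS u n \<ge> 1"
proof -
  have "hS u n \<ge> hb u 0" unfolding hS_def
    by (rule member_le_sum) (auto simp: hb_nonneg)
  thus ?thesis by (simp add: hb_def)
qed

lemma CD: "hS u (Suc n) = (n+2)*hb u (Suc n) + (n+1)*hb u n
              - u*hermite (Suc n) u * hermite n u / fact n"
proof (induction n)
  case 0
  show ?case by (simp add: hS_def hb_def power2_eq_square)
next
  case (Suc n)
  define h0 where "h0 = hermite n u"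
  define h1 where "h1 = hermite (Suc n) u"
  have h2: "hermite (Suc (Suc n)) u = u*h1 - (n+1)*h0" by (simp add: h0_def h1_def)
  have f1: "fact (Suc n) = (real n+1) * fact n" by simp
  have f2: "fact (Suc (Suc n)) = (real n + 2)*(real n+1) * fact n" by (simp add: algebra_simps)
  have fp: "(fact n :: real) > 0" by simp
  have "hS u (Suc (Suc n)) = hS u (Suc n) + hb u (Suc (Suc n))" by (simp add: hS_def)
  also have "\<dots> = (n+2)*hb u (Suc n) + (n+1)*hb u n
              - u*h1 * h0 / fact n + hb u (Suc (Suc n))" using Suc by (simp add: h0_def h1_def algebra_simps)
  also have "\<dots> = (real (Suc n)+2)*hb u (Suc (Suc n)) + (real (Suc n)+1)*hb u (Suc n)
              - u*hermite (Suc (Suc n)) u * hermite (Suc n) u / fact (Suc n)"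
  proof -
    define F where "F = (fact n :: real)"
    have Fp: "F > 0" using fp F_def by simp
    have np: "real n + 1 > 0" "real n + 2 > 0" by auto
    have num: "(u*h1 - (n+1)*h0)^2 - u*(u*h1 - (n+1)*h0)*h1 = (n+1)*((n+1)*h0^2) - (n+1)*(u*h1*h0)"
      by (simp add: algebra_simps power2_eq_square)
    have e1: "(real n+2) * hb u (Suc (Suc n)) = (u*h1 - (n+1)*h0)^2 / ((n+1)*F)"
    proof -
      have gen: "\<And>X c d::real. c > 0 \<Longrightarrow> c * (X/(c*d)) = X/d" by (simp add: field_simps)
      show ?thesis unfolding hb_def h2 f2 F_def[symmetric] using gen[of "real n + 2" "(u * h1 - real (n + 1) * h0)\<^sup>2" "(real n + 1) * F"] np
        by (simp add: mult.assoc)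
    qed
    have e2: "u*hermite (Suc (Suc n)) u * hermite (Suc n) u / fact (Suc n) = u*(u*h1 - (n+1)*h0)*h1 / ((n+1)*F)"
      unfolding h2 f1 F_def[symmetric] h1_def[symmetric] by simp
    have e3: "(real n+1) * hb u n = (n+1)*((n+1)*h0^2) / ((n+1)*F)"
      unfolding hb_def h0_def[symmetric] F_def[symmetric] using np Fp by simp
    have e4: "u*h1*h0/fact n = (n+1)*(u*h1*h0)/((n+1)*F)"
      unfolding F_def[symmetric] using np Fp by simp
    have "(real n+2) * hb u (Suc (Suc n)) - u*hermite (Suc (Suc n)) u * hermite (Suc n) u / fact (Suc n)
        = (real n+1) * hb u n - u*h1*h0/fact n"
      by (simp only: e1 e2 e3 e4 diff_divide_distrib[symmetric] num)
    thus ?thesis by (simp add: algebra_simps)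
  qed
  finally show ?case .
qed

lemma cbound: "\<bar>u*hermite (Suc n) u * hermite n u / fact n\<bar> \<le> \<bar>u\<bar>/2 * sqrt (n+1) * (hb u n + hb u (Suc n))"
proof -
  have fp: "(fact n :: real) > 0" by simp
  have sq: "(hermite (Suc n) u * hermite n u / fact n)^2 = (n+1) * (hb u n * hb u (Suc n))"
  proof -
    have f1: "fact (Suc n) = (real n+1) * fact n" by simp
    have np: "real n + 1 > 0" by simp
    show ?thesis unfolding hb_def f1 using fp np by (simp add: divide_simps power2_eq_square)
  qed
  have "\<bar>hermite (Suc n) u * hermite n u / fact n\<bar> = sqrt ((n+1) * (hb u n * hb u (Suc n)))"
    by (metis sq real_sqrt_abs)
  also have "\<dots> = sqrt (n+1) * sqrt (hb u n * hb u (Suc n))" by (simp add: real_sqrt_mult)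
  also have "\<dots> \<le> sqrt (n+1) * ((hb u n + hb u (Suc n))/2)"
    by (intro mult_left_mono arith_geo_mean_sqrt) (auto simp: hb_nonneg)
  finally have "\<bar>hermite (Suc n) u * hermite n u / fact n\<bar> \<le> sqrt (n+1) * ((hb u n + hb u (Suc n))/2)" .
  hence "\<bar>u\<bar> * \<bar>hermite (Suc n) u * hermite n u / fact n\<bar> \<le> \<bar>u\<bar> * (sqrt (n+1) * ((hb u n + hb u (Suc n))/2))"
    by (rule mult_left_mono) simp
  thus ?thesis by (simp add: abs_mult mult.assoc)
qed



lemma two_step_lower:
  fixes S f :: "nat \<Rightarrow> real"
  assumes step: "\<And>k. k \<ge> N \<Longrightarrow> S k * f (k+2) \<le> S (k+2) * f k"
    and fpos: "\<And>k. k \<ge> N \<Longrightarrow> f k > 0" and Spos: "\<And>k. S k > 0"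
  shows "\<exists>c>0. \<forall>m\<ge>N. c * f m \<le> S m"
proof -
  define c where "c = min (S N / f N) (S (N+1) / f (N+1))"
  have cpos: "c > 0" unfolding c_def using fpos[of N] fpos[of "N+1"] Spos[of N] Spos[of "N+1"] by simp
  have "c * f (N+j) \<le> S (N+j)" for j
  proof (induction j rule: less_induct)
    case (less j)
    show ?case
    proof (cases "j < 2")
      case True
      then consider "j = 0" | "j = 1" by linarith
      thus ?thesis
      proof cases
        case 1
        have "c \<le> S N / f N" unfolding c_def by simp
        thus ?thesis using 1 fpos[of N] by (simp add: pos_le_divide_eq)
      next
        case 2
        have "c \<le> S (N+1) / f (N+1)" unfolding c_def by simp
        thus ?thesis using 2 fpos[of "N+1"] by (simp add: pos_le_divide_eq)
      qed
    next
      case False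
      then obtain i where i: "j = i + 2" by (metis add.commute le_Suc_ex not_less)
      have IH: "c * f (N+i) \<le> S (N+i)" using less i by simp
      have st: "S (N+i) * f (N+i+2) \<le> S (N+i+2) * f (N+i)" using step[of "N+i"] by simp
      have fp1: "f (N+i) > 0" "f (N+i+2) > 0" using fpos by auto
      have "c * f (N+i+2) * f (N+i) = (c * f (N+i)) * f (N+i+2)" by simp
      also have "\<dots> \<le> S (N+i) * f (N+i+2)" using IH fp1 by (intro mult_right_mono) auto
      also have "\<dots> \<le> S (N+i+2) * f (N+i)" by (rule st)
      finally have "c * f (N+i+2) * f (N+i) \<le> S (N+i+2) * f (N+i)" .
      hence "c * f (N+i+2) \<le> S (N+i+2)" using fp1 by simp
      thus ?thesis using i by (simp add: add.assoc)
    qed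
  qed
  hence "\<forall>m\<ge>N. c * f m \<le> S m" by (metis le_add_diff_inverse)
  thus ?thesis using cpos by blast
qed

lemma two_step_upper:
  fixes S f :: "nat \<Rightarrow> real"
  assumes step: "\<And>k. k \<ge> N \<Longrightarrow> S (k+2) * f k \<le> S k * f (k+2)"
    and fpos: "\<And>k. k \<ge> N \<Longrightarrow> f k > 0" and Spos: "\<And>k. S k \<ge> 0"
  shows "\<exists>C. \<forall>m\<ge>N. S m \<le> C * f m"
proof -
  define c where "c = max (S N / f N) (S (N+1) / f (N+1))"
  have "S (N+j) \<le> c * f (N+j)" for j
  proof (induction j rule: less_induct)
    case (less j)
    show ?case
    proof (cases "j < 2")
      case True
      then consider "j = 0" | "j = 1" by linarith
      thus ?thesis
      proof cases
        case 1
        have "S N / f N \<le> c" unfolding c_def by simp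
        thus ?thesis using 1 fpos[of N] by (simp add: pos_divide_le_eq)
      next
        case 2
        have "S (N+1) / f (N+1) \<le> c" unfolding c_def by simp
        thus ?thesis using 2 fpos[of "N+1"] by (simp add: pos_divide_le_eq)
      qed
    next
      case False
      then obtain i where i: "j = i + 2" by (metis add.commute le_Suc_ex not_less)
      have IH: "S (N+i) \<le> c * f (N+i)" using less i by simp
      have st: "S (N+i+2) * f (N+i) \<le> S (N+i) * f (N+i+2)" using step[of "N+i"] by simp
      have fp1: "f (N+i) > 0" "f (N+i+2) > 0" using fpos by auto
      have "S (N+i+2) * f (N+i) \<le> S (N+i) * f (N+i+2)" by (rule st)
      also have "\<dots> \<le> (c * f (N+i)) * f (N+i+2)" using IH fp1 by (intro mult_right_mono) auto
      also have "\<dots> = c * f (N+i+2) * f (N+i)" by simp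
      finally have "S (N+i+2) * f (N+i) \<le> c * f (N+i+2) * f (N+i)" .
      hence "S (N+i+2) \<le> c * f (N+i+2)" using fp1 by simp
      thus ?thesis using i by (simp add: add.assoc)
    qed
  qed
  hence "\<forall>m\<ge>N. S m \<le> c * f m" by (metis le_add_diff_inverse)
  thus ?thesis by blast
qed

lemma ineq_low:
  fixes x y a :: real
  assumes "x \<ge> 4" "y \<ge> 0" "x \<ge> y" "x^2 = y^2 + 2" "a \<ge> 0"
  shows "2*(x^2 + a*x) \<le> (x+y)*(y+(2*a+1))"
proof -
  have "x*y \<ge> y*y" using assms by (intro mult_right_mono) auto
  moreover have "a*y \<ge> 0" using assms by simp
  moreover have "(x+y)*(y+(2*a+1)) = x*y + y*y + 2*(a*x) + 2*(a*y) + x + y" by (simp add: algebra_simps)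
  moreover have "x^2 = y*y+2" using assms by (simp add: power2_eq_square)
  ultimately show ?thesis using assms by (smt (verit))
qed

lemma ineq_up:
  fixes x y a :: real
  assumes "y \<ge> 0" "x \<ge> y" "x^2 = y^2 + 2" "a \<ge> 0"
  shows "(x+y)*(y-2*a) \<le> 2*(x^2 - a*x - 1)"
proof -
  have "x*y \<le> x*x" using assms by (intro mult_left_mono) auto
  moreover have "a*y \<ge> 0" using assms by simp
  moreover have "(x+y)*(y-2*a) = x*y + y*y - 2*(a*x) - 2*(a*y)" by (simp add: algebra_simps)
  moreover have "x^2 = y*y+2" "x^2 = x*x" using assms by (simp_all add: power2_eq_square)
  ultimately show ?thesis using assms by (smt (verit))
qed



lemma hS_step2: "hS u (Suc (Suc k)) = hS u k + (hb u (Suc k) + hb u (Suc (Suc k)))"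
  by (simp add: hS_def)

lemma rec_low: "hS u (Suc (Suc k)) \<le> (real k + 3 + \<bar>u\<bar>/2 * sqrt(real k+2)) * (hb u (Suc k) + hb u (Suc (Suc k)))"
proof -
  define c where "c = u*hermite (Suc (Suc k)) u * hermite (Suc k) u / fact (Suc k)"
  define p where "p = hb u (Suc k)"
  define q where "q = hb u (Suc (Suc k))"
  define s where "s = \<bar>u\<bar>/2 * sqrt (real k+2)"
  have cd: "hS u (Suc (Suc k)) = (real k+3)*q + (real k+2)*p - c"
    using CD[of u "Suc k"] unfolding c_def p_def q_def by (simp add: add.commute add.left_commute)
  have cb: "\<bar>c\<bar> \<le> s * (p + q)"
    using cbound[of u "Suc k"] unfolding c_def p_def q_def s_def by (simp add: add.commute)
  have p0: "p \<ge> 0" unfolding p_def by (rule hb_nonneg)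
  have e: "(real k + 3 + s) * (p + q) = (real k+3)*q + (real k+2)*p + p + s*(p+q)" by (simp add: algebra_simps)
  have "hS u (Suc (Suc k)) \<le> (real k + 3 + s) * (p + q)" using cd cb p0 e by linarith
  thus ?thesis unfolding s_def p_def q_def .
qed

lemma rec_up: "(real k + 2 - \<bar>u\<bar>/2 * sqrt(real k+2)) * (hb u (Suc k) + hb u (Suc (Suc k))) \<le> hS u (Suc (Suc k))"
proof -
  define c where "c = u*hermite (Suc (Suc k)) u * hermite (Suc k) u / fact (Suc k)"
  define p where "p = hb u (Suc k)"
  define q where "q = hb u (Suc (Suc k))"
  define s where "s = \<bar>u\<bar>/2 * sqrt (real k+2)"
  have cd: "hS u (Suc (Suc k)) = (real k+3)*q + (real k+2)*p - c"
    using CD[of u "Suc k"] unfolding c_def p_def q_def by (simp add: add.commute add.left_commute)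
  have cb: "\<bar>c\<bar> \<le> s * (p + q)"
    using cbound[of u "Suc k"] unfolding c_def p_def q_def s_def by (simp add: add.commute)
  have q0: "q \<ge> 0" unfolding q_def by (rule hb_nonneg)
  have e: "(real k + 2 - s) * (p + q) = (real k+3)*q + (real k+2)*p - q - s*(p+q)" by (simp add: algebra_simps)
  have "(real k + 2 - s) * (p + q) \<le> hS u (Suc (Suc k))" using cd cb q0 e by linarith
  thus ?thesis unfolding s_def p_def q_def .
qed

lemma low_step:
  assumes x4: "sqrt (real k + 2) \<ge> 4"
  shows "hS u k * (sqrt (real (k+2)) + (\<bar>u\<bar>+1)) \<le> hS u (k+2) * (sqrt (real k) + (\<bar>u\<bar>+1))"
proof -
  define a where "a = \<bar>u\<bar>/2"
  define x where "x = sqrt (real k + 2)"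
  define y where "y = sqrt (real k)"
  define D where "D = \<bar>u\<bar>+1"
  define M1 where "M1 = real k + 2 + a*x"
  define A where "A = hS u k"
  define B where "B = hS u (k+2)"
  have a0: "a \<ge> 0" unfolding a_def by simp
  have x4': "x \<ge> 4" using x4 x_def by simp
  have y0: "y \<ge> 0" unfolding y_def by simp
  have xy: "y \<le> x" unfolding x_def y_def by simp
  have xx: "x^2 = real k + 2" unfolding x_def by simp
  have yy: "y^2 = real k" unfolding y_def by simp
  have M1p: "M1 > 0" unfolding M1_def using mult_nonneg_nonneg[OF a0, of x] x4' by simp
  have A0: "A \<ge> 0" unfolding A_def using hS_pos[of u k] by simp
  have rl: "B \<le> (M1 + 1) * (B - A)"
    using rec_low[where u=u and k=k] hS_step2[of u k] unfolding M1_def B_def A_def a_def x_def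
    by (simp add: algebra_simps)
  hence r1: "A * (M1+1) \<le> B * M1" by (simp add: algebra_simps)
  have il: "2*(x^2 + a*x) \<le> (x+y)*(y+(2*a+1))" using ineq_low[OF x4' y0 xy] xx yy a0 by simp
  have "(x+y)*((x-y)*M1) = 2*M1" using xx yy by (simp add: algebra_simps power2_eq_square)
  also have "\<dots> \<le> (x+y)*(y+D)" using il xx unfolding M1_def D_def a_def by simp
  finally have "(x-y)*M1 \<le> y + D" using x4' y0 by (simp add: mult_le_cancel_left_pos)
  hence r2: "(x+D)*M1 \<le> (y+D)*(M1+1)" by (simp add: algebra_simps)
  have "A*(x+D)*M1 \<le> A*((y+D)*(M1+1))" using r2 A0 by (simp add: mult.assoc mult_left_mono)
  also have "\<dots> = (A*(M1+1))*(y+D)" by simp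
  also have "\<dots> \<le> (B*M1)*(y+D)" using r1 y0 D_def by (intro mult_right_mono) auto
  finally have "A*(x+D)*M1 \<le> B*(y+D)*M1" by (simp add: algebra_simps)
  hence "A*(x+D) \<le> B*(y+D)" using M1p by simp
  thus ?thesis unfolding A_def B_def x_def y_def D_def by (simp add: add.commute)
qed

lemma up_step:
  assumes y0: "sqrt (real k) \<ge> \<bar>u\<bar> + 2"
  shows "hS u (k+2) * (sqrt (real k) - \<bar>u\<bar>) \<le> hS u k * (sqrt (real (k+2)) - \<bar>u\<bar>)"
proof -
  define a where "a = \<bar>u\<bar>/2"
  define x where "x = sqrt (real k + 2)"
  define y where "y = sqrt (real k)"
  define D where "D = \<bar>u\<bar>"
  define L where "L = real k + 1 - a*x"
  define A where "A = hS u k"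
  define B where "B = hS u (k+2)"
  have a0: "a \<ge> 0" unfolding a_def by simp
  have y0': "y \<ge> 2*a + 2" using y0 y_def a_def by simp
  have y0: "y \<ge> 0" unfolding y_def by simp
  have xy: "y \<le> x" unfolding x_def y_def by simp
  have xx: "x^2 = real k + 2" unfolding x_def by simp
  have yy: "y^2 = real k" unfolding y_def by simp
  have "x*x \<ge> (2*a+2)*x" using y0' xy y0 by (intro mult_right_mono) auto
  hence Lp: "L > 0" unfolding L_def using xx y0' xy a0 by (simp add: power2_eq_square algebra_simps)
  have A0: "A \<ge> 0" unfolding A_def using hS_pos[of u k] by simp
  have rl: "(L+1) * (B - A) \<le> B"
    using rec_up[where u=u and k=k] hS_step2[of u k] unfolding L_def B_def A_def a_def x_def
    by (simp add: algebra_simps)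
  hence r1: "B * L \<le> A * (L+1)" by (simp add: algebra_simps)
  have iu: "(x+y)*(y-2*a) \<le> 2*(x^2 - a*x - 1)" using ineq_up[OF y0 xy] xx yy a0 by simp
  have "(x+y)*(y-D) \<le> 2*L" using iu xx unfolding L_def D_def a_def by simp
  also have "\<dots> = (x+y)*((x-y)*L)" using xx yy by (simp add: algebra_simps power2_eq_square)
  finally have fin: "(x+y)*(y-D) \<le> (x+y)*((x-y)*L)" .
  have xyp: "x+y > 0" using y0' a0 xy by linarith
  have "y - D \<le> (x-y)*L" using fin xyp mult_le_cancel_left_pos by blast
  hence r2: "(y-D)*(L+1) \<le> (x-D)*L" by (simp add: algebra_simps)
  have yD: "y - D \<ge> 0" using y0' a_def D_def by simp
  have "B*(y-D)*L = (B*L)*(y-D)" by simp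
  also have "\<dots> \<le> (A*(L+1))*(y-D)" using r1 yD by (intro mult_right_mono) auto
  also have "\<dots> = A*((y-D)*(L+1))" by simp
  also have "\<dots> \<le> A*((x-D)*L)" using r2 A0 by (intro mult_left_mono) auto
  finally have "B*(y-D)*L \<le> A*(x-D)*L" by (simp add: algebra_simps)
  hence "B*(y-D) \<le> A*(x-D)" using Lp by simp
  thus ?thesis unfolding A_def B_def x_def y_def D_def by (simp add: add.commute)
qed



lemma sqrt_ge_of_nat_ge: assumes "t \<ge> 0" "k \<ge> nat \<lceil>t^2\<rceil>" shows "sqrt (real k) \<ge> t"
proof -
  have "real (nat \<lceil>t^2\<rceil>) \<le> real k" using assms(2) by (simp only: of_nat_le_iff)
  hence "real k \<ge> t^2" using real_nat_ceiling_ge[of "t^2"] by linarith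
  hence "sqrt (real k) \<ge> sqrt (t^2)" by (rule real_sqrt_le_mono)
  thus ?thesis using assms(1) by simp
qed

lemma S_upper: "\<exists>C\<ge>0. \<exists>N. \<forall>m\<ge>N. hS u m \<le> C * sqrt (real m)"
proof -
  define N where "N = nat \<lceil>(\<bar>u\<bar>+3)^2\<rceil>"
  define f where "f = (\<lambda>m::nat. sqrt (real m) - \<bar>u\<bar>)"
  have big: "sqrt (real k) \<ge> \<bar>u\<bar> + 3" if "k \<ge> N" for k
    using sqrt_ge_of_nat_ge[of "\<bar>u\<bar>+3" k] that N_def by simp
  have "\<exists>C. \<forall>m\<ge>N. hS u m \<le> C * f m"
  proof (rule two_step_upper)
    fix k assume "k \<ge> N"
    hence "sqrt (real k) \<ge> \<bar>u\<bar> + 2" using big[of k] by linarith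
    thus "hS u (k+2) * f k \<le> hS u k * f (k+2)" using up_step[of u k] unfolding f_def by simp
  next
    fix k assume "k \<ge> N" thus "f k > 0" using big[of k] unfolding f_def by simp
  next
    fix k show "hS u k \<ge> 0" using hS_pos[of u k] by simp
  qed
  then obtain C where C: "\<forall>m\<ge>N. hS u m \<le> C * f m" by blast
  have "hS u m \<le> max C 0 * sqrt (real m)" if "m \<ge> N" for m
  proof -
    have fm: "f m > 0" "f m \<le> sqrt (real m)" using big[OF that] unfolding f_def by auto
    have "hS u m \<le> C * f m" using C that by simp
    also have "\<dots> \<le> max C 0 * f m" using fm by (intro mult_right_mono) auto
    also have "\<dots> \<le> max C 0 * sqrt (real m)" using fm by (intro mult_left_mono) auto
    finally show ?thesis .
  qed
  thus ?thesis by (intro exI[of _ "max C 0"]) auto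
qed

lemma S_lower: "\<exists>c>0. \<exists>N. \<forall>m\<ge>N. c * sqrt (real m) \<le> hS u m"
proof -
  define N :: nat where "N = 14"
  define f where "f = (\<lambda>m::nat. sqrt (real m) + (\<bar>u\<bar>+1))"
  have "\<exists>c>0. \<forall>m\<ge>N. c * f m \<le> hS u m"
  proof (rule two_step_lower)
    fix k assume "k \<ge> N"
    hence "real k + 2 \<ge> 4^2" unfolding N_def by simp
    hence "sqrt (real k + 2) \<ge> sqrt (4^2)" by (rule real_sqrt_le_mono)
    hence "sqrt (real k + 2) \<ge> 4" by simp
    thus "hS u k * f (k+2) \<le> hS u (k+2) * f k" using low_step[of k u] unfolding f_def by simp
  next
    fix k show "f k > 0" unfolding f_def by (simp add: add_nonneg_pos)
  next
    fix k show "hS u k > 0" using hS_pos[of u k] by simp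
  qed
  then obtain c where c: "c > 0" "\<forall>m\<ge>N. c * f m \<le> hS u m" by blast
  have "c * sqrt (real m) \<le> hS u m" if "m \<ge> N" for m
  proof -
    have "c * sqrt (real m) \<le> c * f m" using c(1) unfolding f_def by (intro mult_left_mono) auto
    also have "\<dots> \<le> hS u m" using c(2) that by simp
    finally show ?thesis .
  qed
  thus ?thesis using c(1) by blast
qed



lemma term_eq: "(hermite (Suc q) u)^2 / (fact (Suc q) * real (Suc q) powr \<gamma>) = hb u (Suc q) / real (Suc q) powr \<gamma>"
  unfolding hb_def by simp

lemma conv_part:
  assumes g: "\<gamma> > 1/2"
  shows "summable (\<lambda>q::nat. hb u (Suc q) / real (Suc q) powr \<gamma>)"
proof -
  obtain C N where C0: "C \<ge> 0" and CN: "\<forall>m\<ge>N. hS u m \<le> C * sqrt (real m)" using S_upper[of u] by blast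
  define N2 where "N2 = max N (nat \<lceil>\<bar>u\<bar>^2\<rceil>)"
  have sumg: "summable (\<lambda>q::nat. 2*C * real (Suc q) powr (-(\<gamma>+1/2)))"
  proof -
    have "summable (\<lambda>n::nat. real n powr (-(\<gamma>+1/2)))" using g by (simp add: summable_real_powr_iff)
    hence "summable (\<lambda>q::nat. real (q+1) powr (-(\<gamma>+1/2)))" by (subst summable_iff_shift) 
    thus ?thesis by (intro summable_mult) simp
  qed
  show ?thesis
  proof (rule summable_comparison_test'[OF sumg])
    fix q assume qN: "q \<ge> N2"
    define x where "x = sqrt (real q + 2)"
    define w where "w = sqrt (real q + 1)"
    define p where "p = hb u (Suc q)"
    have p0: "p \<ge> 0" unfolding p_def by (rule hb_nonneg)
    have xx: "x^2 = real q + 2" unfolding x_def by simp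
    have x1: "x \<ge> 1" unfolding x_def by simp
    have wx: "w \<le> x" "w > 0" unfolding x_def w_def by auto
    have xu: "x \<ge> \<bar>u\<bar>"
    proof -
      have "sqrt (real q) \<ge> \<bar>u\<bar>" using sqrt_ge_of_nat_ge[of "\<bar>u\<bar>" q] qN N2_def by simp
      moreover have "sqrt (real q) \<le> x" unfolding x_def by simp
      ultimately show ?thesis by linarith
    qed
    have "\<bar>u\<bar>/2 * x \<le> x*x/2" using xu x1 by (simp add: mult_right_mono)
    hence K: "real q + 2 - \<bar>u\<bar>/2 * x \<ge> x^2/2" using xx by (simp add: power2_eq_square)
    have "x^2/2 * p \<le> (real q + 2 - \<bar>u\<bar>/2 * x) * p" using K p0 by (rule mult_right_mono)
    also have "\<dots> \<le> (real q + 2 - \<bar>u\<bar>/2 * x) * (p + hb u (Suc (Suc q)))"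
      using K hb_nonneg[of u "Suc (Suc q)"] xx by (intro mult_left_mono) (auto simp: power2_eq_square)
    also have "\<dots> \<le> hS u (Suc (Suc q))" using rec_up[where u=u and k=q] unfolding p_def x_def by simp
    also have "\<dots> \<le> C * x"
    proof -
      have "Suc (Suc q) \<ge> N" using qN N2_def by simp
      hence "hS u (Suc (Suc q)) \<le> C * sqrt (real (Suc (Suc q)))" using CN by blast
      thus ?thesis unfolding x_def by (simp add: add.commute)
    qed
    finally have "x * (x * p) \<le> x * (2*C)" by (simp add: power2_eq_square algebra_simps)
    hence "x*p \<le> 2*C" using x1 by simp
    moreover have "w*p \<le> x*p" using wx p0 by (intro mult_right_mono) auto
    ultimately have "w*p \<le> 2*C" by linarith
    hence pw: "p \<le> 2*C / w" using wx by (simp add: field_simps)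
    have rp: "real (Suc q) powr \<gamma> > 0" by simp
    have "norm (p / real (Suc q) powr \<gamma>) = p / real (Suc q) powr \<gamma>" using p0 by simp
    also have "\<dots> \<le> (2*C / w) / real (Suc q) powr \<gamma>" using pw rp by (intro divide_right_mono) auto
    also have "\<dots> = 2*C * real (Suc q) powr (-(\<gamma>+1/2))"
    proof -
      have "w = real (Suc q) powr (1/2)" unfolding w_def by (simp add: powr_half_sqrt add.commute)
      hence e: "w * real (Suc q) powr \<gamma> = real (Suc q) powr (\<gamma>+1/2)" by (simp add: powr_add)
      have "(2*C / w) / real (Suc q) powr \<gamma> = 2*C / (w * real (Suc q) powr \<gamma>)" by simp
      also have "\<dots> = 2*C / real (Suc q) powr (\<gamma>+1/2)" by (simp only: e)
      also have "\<dots> = 2*C * real (Suc q) powr (-(\<gamma>+1/2))" by (simp only: powr_minus divide_inverse)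
      finally show ?thesis .
    qed
    finally show "norm (hb u (Suc q) / real (Suc q) powr \<gamma>) \<le> 2*C * real (Suc q) powr (-(\<gamma>+1/2))"
      unfolding p_def .
  qed
qed



lemma div_part:
  assumes g: "\<gamma> \<le> 1/2" and sm: "summable (\<lambda>q::nat. hb u (Suc q) / real (Suc q) powr \<gamma>)"
  shows False
proof -
  define r where "r = (\<lambda>q::nat. hb u (Suc q) / sqrt (real (Suc q)))"
  have sr: "summable r"
  proof (rule summable_comparison_test'[OF sm])
    fix q :: nat assume "q \<ge> 0"
    have "real (Suc q) powr \<gamma> \<le> real (Suc q) powr (1/2)" using g by (intro powr_mono) auto
    hence le: "real (Suc q) powr \<gamma> \<le> sqrt (real (Suc q))" by (simp add: powr_half_sqrt)
    have "hb u (Suc q) / sqrt (real (Suc q)) \<le> hb u (Suc q) / real (Suc q) powr \<gamma>"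
      using le hb_nonneg[of u "Suc q"] by (intro divide_left_mono) auto
    thus "norm (r q) \<le> hb u (Suc q) / real (Suc q) powr \<gamma>" unfolding r_def using hb_nonneg[of u "Suc q"] by simp
  qed
  hence sr2: "summable (\<lambda>q. r q + r (Suc q))" using summable_Suc_iff[of r] by (intro summable_add) auto
  obtain c N where c0: "c > 0" and cN: "\<forall>m\<ge>N. c * sqrt (real m) \<le> hS u m" using S_lower[of u] by blast
  define a where "a = \<bar>u\<bar>/2"
  have a0: "a \<ge> 0" unfolding a_def by simp
  have sh: "summable (\<lambda>q::nat. c / ((2+a) * (real q + 2)))"
  proof (rule summable_comparison_test'[OF sr2])
    fix q assume qN: "q \<ge> N"
    define x where "x = sqrt (real q + 2)"
    define P where "P = hb u (Suc q) + hb u (Suc (Suc q))"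
    have xx: "x^2 = real q + 2" unfolding x_def by simp
    have x1: "x \<ge> 1" unfolding x_def by simp
    have "c * x \<le> hS u (Suc (Suc q))"
    proof -
      have "Suc (Suc q) \<ge> N" using qN by simp
      hence "c * sqrt (real (Suc (Suc q))) \<le> hS u (Suc (Suc q))" using cN by blast
      thus ?thesis unfolding x_def by (simp add: add.commute)
    qed
    also have "\<dots> \<le> (real q + 3 + a * x) * P" using rec_low[where u=u and k=q] unfolding P_def x_def a_def by simp
    also have "\<dots> \<le> ((2+a) * x^2) * P"
    proof (rule mult_right_mono)
      have "a * x \<le> a * x^2" using a0 x1 by (intro mult_left_mono) (auto simp: power2_eq_square)
      thus "real q + 3 + a * x \<le> (2+a) * x^2" using xx by (simp add: algebra_simps)
      show "P \<ge> 0" unfolding P_def using hb_nonneg[of u] by (simp add: add_nonneg_nonneg)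
    qed
    finally have "c * x \<le> ((2+a) * x^2) * P" .
    hence "x * c \<le> x * ((2+a) * x * P)" by (simp add: power2_eq_square algebra_simps)
    hence cle: "c \<le> (2+a) * x * P" using x1 by simp
    have pos: "(2+a) * x^2 > 0" using a0 x1 by simp
    have "c / ((2+a) * (real q + 2)) = c / ((2+a)*x^2)" using xx by simp
    also have "\<dots> \<le> ((2+a) * x * P) / ((2+a)*x^2)" using cle pos by (intro divide_right_mono) auto
    also have "\<dots> = P / x" using a0 x1 by (simp add: power2_eq_square)
    also have "\<dots> \<le> r q + r (Suc q)"
    proof -
      have s1: "sqrt (real (Suc q)) \<le> x" "sqrt (real (Suc q)) > 0" unfolding x_def by auto
      have e1: "hb u (Suc q) / x \<le> r q" unfolding r_def
        using s1 x1 hb_nonneg[of u "Suc q"] by (intro divide_left_mono mult_pos_pos) auto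
      have e2: "hb u (Suc (Suc q)) / x = r (Suc q)" unfolding r_def x_def by (simp add: add.commute)
      show ?thesis using e1 e2 unfolding P_def add_divide_distrib by linarith
    qed
    finally show "norm (c / ((2+a) * (real q + 2))) \<le> r q + r (Suc q)" using c0 a0 by simp
  qed
  hence "summable (\<lambda>q::nat. ((2+a)/c) * (c / ((2+a) * (real q + 2))))" by (rule summable_mult)
  moreover have "((2+a)/c) * (c / ((2+a) * (real q + 2))) = inverse (real (q + 2))" for q :: nat
  proof -
    have nz: "2+a \<noteq> 0" "c \<noteq> 0" "real q + 2 \<noteq> 0" using c0 a0 by auto
    have "((2+a)/c) * (c / ((2+a) * (real q + 2))) = (((2+a)/c) * c) / ((2+a) * (real q + 2))" by simp
    also have "\<dots> = (2+a) / ((2+a) * (real q + 2))" using nz by simp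
    also have "\<dots> = 1 / (real q + 2)" using nz by simp
    finally show ?thesis by (simp add: inverse_eq_divide)
  qed
  ultimately have "summable (\<lambda>q::nat. inverse (real (q + 2)))" by simp
  hence "summable (\<lambda>n::nat. inverse (real n))" by (subst (asm) summable_iff_shift)
  thus False using not_summable_harmonic by blast
qed

theorem mainTheorem8:
  fixes u \<gamma> :: real
  shows "summable (\<lambda>q::nat. (hermite (Suc q) u)^2 / (fact (Suc q) * real (Suc q) powr \<gamma>))
         \<longleftrightarrow> \<gamma> > 1/2"
  unfolding term_eq using conv_part div_part by (meson not_less)


end
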